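(* Let $G$ be a connected $4$-regular graph and let $H$ be a proper subgraph of $G$ whose number of vertices is not divisible by $3$. Then $H$ contains a vertex of degree at most $3$ in $H$ which does not lie in a connected component of $H$ consisting of a single triangle. *)

theory Defs
  imports Main
begin

definition graph :: "'a set \<Rightarrow> 'a set set \<Rightarrow> bool" where
  "graph V E \<longleftrightarrow> finite V \<and>
     (\<forall>e\<in>E. \<exists>u v. u \<noteq> v \<and> u \<in> V \<and> v \<in> V \<and> e = {u, v})"

definition adj :: "'a set set \<Rightarrow> 'a \<Rightarrow> 'a \<Rightarrow> bool" where
  "adj E u v \<longleftrightarrow> {u, v} \<in> E"

definition degree :: "'a set \<Rightarrow> 'a set set \<Rightarrow> 'a \<Rightarrow> nat" where
  "degree V E v = card {u \<in> V. adj E v u}"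

definition regular :: "nat \<Rightarrow> 'a set \<Rightarrow> 'a set set \<Rightarrow> bool" where
  "regular k V E \<longleftrightarrow> (\<forall>v\<in>V. degree V E v = k)"

definition connected_graph :: "'a set \<Rightarrow> 'a set set \<Rightarrow> bool" where
  "connected_graph V E \<longleftrightarrow> V \<noteq> {} \<and> (\<forall>u\<in>V. \<forall>v\<in>V. (adj E)\<^sup>*\<^sup>* u v)"

definition subgraph :: "'a set \<Rightarrow> 'a set set \<Rightarrow> 'a set \<Rightarrow> 'a set set \<Rightarrow> bool" where
  "subgraph V' E' V E \<longleftrightarrow> graph V' E' \<and> V' \<subseteq> V \<and> E' \<subseteq> E"

definition component :: "'a set \<Rightarrow> 'a set set \<Rightarrow> 'a \<Rightarrow> 'a set" where
  "component V E v = {u \<in> V. (adj E)\<^sup>*\<^sup>* v u}"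

definition in_triangle_component :: "'a set \<Rightarrow> 'a set set \<Rightarrow> 'a \<Rightarrow> bool" where
  "in_triangle_component V E v \<longleftrightarrow>
     card (component V E v) = 3 \<and>
     (\<forall>x\<in>component V E v. \<forall>y\<in>component V E v. x \<noteq> y \<longrightarrow> adj E x y)"

end

theory Submission
  imports Defs
begin

lemma adj_sym: "adj E u v = adj E v u"
  unfolding adj_def by (simp add: insert_commute)

lemma rtc_sym: "(adj E)\<^sup>*\<^sup>* a b \<Longrightarrow> (adj E)\<^sup>*\<^sup>* b a"
proof (induction rule: rtranclp_induct)
  case base then show ?case by simp
next
  case (step y z)
  then show ?case using adj_sym[of E y z] by (meson converse_rtranclp_into_rtranclp)
qed

lemma comp_eq: "(adj E)\<^sup>*\<^sup>* v u \<Longrightarrow> component V E u = component V E v"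
  unfolding component_def
  by (auto dest: rtc_sym intro: rtranclp_trans)

lemma tri_eq: "(adj E)\<^sup>*\<^sup>* v u \<Longrightarrow> in_triangle_component V E u = in_triangle_component V E v"
  unfolding in_triangle_component_def using comp_eq[of E v u V] by simp

theorem lemmaA16:
  fixes V V' :: "'a set" and E E' :: "'a set set"
  assumes "graph V E"
    and "connected_graph V E"
    and "regular 4 V E"
    and "subgraph V' E' V E"
    and "(V', E') \<noteq> (V, E)"
    and "\<not> 3 dvd card V'"
  shows "\<exists>v\<in>V'. degree V' E' v \<le> 3 \<and> \<not> in_triangle_component V' E' v"
proof (rule ccontr)
  assume H: "\<not> ?thesis"
  have finV: "finite V" using assms(1) unfolding graph_def by blast
  have sub: "V' \<subseteq> V" "E' \<subseteq> E" using assms(4) unfolding subgraph_def by auto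
  have finV': "finite V'" using finV sub finite_subset by blast
  define W where "W = {v\<in>V'. \<not> in_triangle_component V' E' v}"
  have Wfull: "\<And>v u. v \<in> W \<Longrightarrow> u \<in> V \<Longrightarrow> adj E v u \<Longrightarrow> u \<in> V' \<and> adj E' v u"
  proof -
    fix v u assume v: "v \<in> W" and u: "u \<in> V" "adj E v u"
    have vV: "v \<in> V" using v sub W_def by auto
    have d: "degree V' E' v > 3" using H v W_def by auto
    have ss: "{u \<in> V'. adj E' v u} \<subseteq> {u \<in> V. adj E v u}"
      using sub unfolding adj_def by auto
    have d4: "card {u \<in> V. adj E v u} = 4"
      using assms(3) vV unfolding regular_def degree_def by auto
    have fin: "finite {u \<in> V. adj E v u}" using finV by simp
    have "card {u \<in> V'. adj E' v u} \<le> 4" using card_mono[OF fin ss] d4 by simp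
    with d have "card {u \<in> V'. adj E' v u} = card {u \<in> V. adj E v u}"
      using d4 unfolding degree_def by simp
    hence "{u \<in> V'. adj E' v u} = {u \<in> V. adj E v u}"
      using card_subset_eq[OF fin ss] by simp
    thus "u \<in> V' \<and> adj E' v u" using u by blast
  qed
  have Wclosed: "\<And>v u. v \<in> W \<Longrightarrow> u \<in> V \<Longrightarrow> adj E v u \<Longrightarrow> u \<in> W"
  proof -
    fix v u assume a: "v \<in> W" "u \<in> V" "adj E v u"
    then have "u \<in> V'" "adj E' v u" using Wfull by auto
    then have "(adj E')\<^sup>*\<^sup>* v u" by auto
    then show "u \<in> W" using a(1) tri_eq[of E' v u V'] \<open>u \<in> V'\<close> W_def by auto
  qed
  have Wne: "W \<noteq> {}"
  proof
    assume We: "W = {}"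
    define C where "C = component V' E' ` V'"
    have UC: "\<Union>C = V'"
      unfolding C_def component_def by auto
    have fC: "finite C" using finV' C_def by simp
    have c3: "\<forall>c\<in>C. card c = 3"
      using We unfolding W_def C_def in_triangle_component_def by auto
    have disj: "\<forall>c1\<in>C. \<forall>c2\<in>C. c1 \<noteq> c2 \<longrightarrow> c1 \<inter> c2 = {}"
    proof (intro ballI impI)
      fix c1 c2 assume c: "c1 \<in> C" "c2 \<in> C" "c1 \<noteq> c2"
      obtain a b where ab: "c1 = component V' E' a" "c2 = component V' E' b"
        using c C_def by auto
      show "c1 \<inter> c2 = {}"
      proof (rule ccontr)
        assume "c1 \<inter> c2 \<noteq> {}"
        then obtain x where "x \<in> c1" "x \<in> c2" by auto
        then have "(adj E')\<^sup>*\<^sup>* a x" "(adj E')\<^sup>*\<^sup>* b x"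
          using ab component_def by (auto simp: component_def)
        then have "c1 = component V' E' x" "c2 = component V' E' x"
          using ab comp_eq by metis+
        with c show False by simp
      qed
    qed
    have "3 * card C = card (\<Union>C)"
      by (rule card_partition) (use fC disj c3 UC finV' in auto)
    then have "card V' = 3 * card C" using UC by simp
    then show False using assms(6) by (simp add: dvd_def)
  qed
  then obtain w where w: "w \<in> W" by auto
  have wV: "w \<in> V" using w W_def sub by auto
  have reach: "\<And>v. (adj E)\<^sup>*\<^sup>* w v \<Longrightarrow> v \<in> W"
  proof -
    fix v assume "(adj E)\<^sup>*\<^sup>* w v"
    then show "v \<in> W"
    proof (induction rule: rtranclp_induct)
      case base then show ?case using w by simp
    next
      case (step y z)
      have "{y, z} \<in> E" using step(2) unfolding adj_def .
      then obtain a b where ab: "a \<in> V" "b \<in> V" "{y, z} = {a, b}"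
        using assms(1) unfolding graph_def by blast
      have "z \<in> {a, b}" using ab(3) by (metis insertCI)
      then have "z \<in> V" using ab by blast
      then show ?case using Wclosed step by blast
    qed
  qed
  have VW: "V \<subseteq> W" proof
    fix v assume "v \<in> V"
    then have "(adj E)\<^sup>*\<^sup>* w v" using assms(2) wV unfolding connected_graph_def by blast
    then show "v \<in> W" by (rule reach)
  qed
  then have VV: "V' = V" using sub W_def by auto
  have "E \<subseteq> E'"
  proof
    fix e assume e: "e \<in> E"
    then obtain u v where uv: "u \<in> V" "v \<in> V" "e = {u, v}"
      using assms(1) unfolding graph_def by blast
    then have "adj E u v" using e unfolding adj_def by simp
    then have "adj E' u v" using Wfull VW uv by blast
    then show "e \<in> E'" using uv unfolding adj_def by simp
  qed
  then have "E' = E" using sub by auto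
  then show False using VV assms(5) by simp
qed

end
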